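(* There is an absolute constant $C$ such that for every $\alpha>0$ and every classical ($C^2$) solution $u$ of the equivariant Skyrme equation on an open subset of $\{(t,r):r>0\}$, \[ |\partial_\xi(r(e+m))|\le C\big((e+m)(e-m)\big)^{1/2},\qquad |\partial_\eta(r(e-m))|\le C\big((e+m)(e-m)\big)^{1/2}, \] where $\eta=t+r$, $\xi=t-r$ are null coordinates, i.e. $\partial_\xi=\frac12(\partial_t-\partial_r)$, $\partial_\eta=\frac12(\partial_t+\partial_r)$.
   Context: The equivariant Skyrme equation is \[ w(u_{tt}-u_{rr}) - \Big(1-\tfrac{\alpha^2\sin^2u}{r^2}\Big)\tfrac{u_r}{r} + \tfrac{\sin 2u}{2r^2}\big[\alpha^2(u_t^2-u_r^2)+1\big]=0,\qquad w:=1+\tfrac{\alpha^2\sin^2u}{r^2}. \] Energy density $e:=w\frac{u_t^2+u_r^2}{2}+\frac{\sin^2u}{2r^2}$, momentum density $m:=w u_tu_r$ (note $e\pm m\ge0$). *)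

theory Defs
  imports "HOL-Analysis.Analysis"
begin

text \<open>Points of the (t,r) half-plane are pairs p = (t, r): t = fst p, r = snd p.
  Partial derivatives are taken as directional Frechet derivatives.\<close>

definition dt :: "(real \<times> real \<Rightarrow> real) \<Rightarrow> real \<times> real \<Rightarrow> real" where
  "dt f p = frechet_derivative f (at p) (1, 0)"

definition dr :: "(real \<times> real \<Rightarrow> real) \<Rightarrow> real \<times> real \<Rightarrow> real" where
  "dr f p = frechet_derivative f (at p) (0, 1)"

definition dxi :: "(real \<times> real \<Rightarrow> real) \<Rightarrow> real \<times> real \<Rightarrow> real" where
  "dxi f p = frechet_derivative f (at p) (1/2, -1/2)"

definition deta :: "(real \<times> real \<Rightarrow> real) \<Rightarrow> real \<times> real \<Rightarrow> real" where
  "deta f p = frechet_derivative f (at p) (1/2, 1/2)"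

definition C2_on :: "(real \<times> real) set \<Rightarrow> (real \<times> real \<Rightarrow> real) \<Rightarrow> bool" where
  "C2_on U u \<longleftrightarrow>
     (\<forall>p\<in>U. u differentiable (at p)) \<and>
     (\<forall>p\<in>U. dt u differentiable (at p) \<and> dr u differentiable (at p)) \<and>
     continuous_on U (dt (dt u)) \<and> continuous_on U (dr (dt u)) \<and>
     continuous_on U (dt (dr u)) \<and> continuous_on U (dr (dr u))"

definition skyrme_w :: "real \<Rightarrow> (real \<times> real \<Rightarrow> real) \<Rightarrow> real \<times> real \<Rightarrow> real" where
  "skyrme_w \<alpha> u p = 1 + \<alpha>\<^sup>2 * (sin (u p))\<^sup>2 / (snd p)\<^sup>2"

definition skyrme_eq_on :: "real \<Rightarrow> (real \<times> real) set \<Rightarrow> (real \<times> real \<Rightarrow> real) \<Rightarrow> bool" where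
  "skyrme_eq_on \<alpha> U u \<longleftrightarrow> (\<forall>p\<in>U.
     skyrme_w \<alpha> u p * (dt (dt u) p - dr (dr u) p)
     - (1 - \<alpha>\<^sup>2 * (sin (u p))\<^sup>2 / (snd p)\<^sup>2) * dr u p / snd p
     + sin (2 * u p) / (2 * (snd p)\<^sup>2) * (\<alpha>\<^sup>2 * ((dt u p)\<^sup>2 - (dr u p)\<^sup>2) + 1) = 0)"

definition energy :: "real \<Rightarrow> (real \<times> real \<Rightarrow> real) \<Rightarrow> real \<times> real \<Rightarrow> real" where
  "energy \<alpha> u p = skyrme_w \<alpha> u p * ((dt u p)\<^sup>2 + (dr u p)\<^sup>2) / 2
     + (sin (u p))\<^sup>2 / (2 * (snd p)\<^sup>2)"

definition momentum :: "real \<Rightarrow> (real \<times> real \<Rightarrow> real) \<Rightarrow> real \<times> real \<Rightarrow> real" where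
  "momentum \<alpha> u p = skyrme_w \<alpha> u p * dt u p * dr u p"

end

theory Submission
  imports Defs
begin


lemma lin2:
  fixes L :: "real \<times> real \<Rightarrow> real"
  assumes "linear L"
  shows "L (a, b) = a * L (1, 0) + b * L (0, 1)"
proof -
  have e: "(a, b) = a *\<^sub>R (1, 0) + b *\<^sub>R (0::real, 1::real)" by simp
  show ?thesis
    apply (subst e)
    using assms by (simp only: linear_add linear_cmul real_scaleR_def)
qed

lemma partial_t:
  fixes f :: "real \<times> real \<Rightarrow> real"
  assumes "f differentiable (at (x, y))"
  shows "((\<lambda>s. f (s, y)) has_real_derivative dt f (x, y)) (at x)"
proof -
  let ?D = "frechet_derivative f (at (x, y))"
  have Df: "(f has_derivative ?D) (at (x, y))" using assms frechet_derivative_works by blast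
  have lin: "linear ?D" using Df has_derivative_linear by blast
  have P: "((\<lambda>s. (s, y)) has_derivative (\<lambda>h. (h, 0))) (at x)"
    by (auto intro!: derivative_eq_intros)
  have "((\<lambda>s. f (s, y)) has_derivative (\<lambda>h. ?D (h, 0))) (at x)"
    using has_derivative_compose[OF P Df] by simp
  moreover have "(\<lambda>h. ?D (h, 0)) = (*) (dt f (x, y))"
    proof
    fix h show "?D (h, 0) = dt f (x, y) * h"
      using linear_cmul[OF lin, of h "(1, 0)"] by (simp add: dt_def mult.commute)
  qed
  ultimately show ?thesis by (simp add: has_field_derivative_def)
qed

lemma partial_r:
  fixes f :: "real \<times> real \<Rightarrow> real"
  assumes "f differentiable (at (x, y))"
  shows "((\<lambda>s. f (x, s)) has_real_derivative dr f (x, y)) (at y)"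
proof -
  let ?D = "frechet_derivative f (at (x, y))"
  have Df: "(f has_derivative ?D) (at (x, y))" using assms frechet_derivative_works by blast
  have lin: "linear ?D" using Df has_derivative_linear by blast
  have P: "((\<lambda>s. (x, s)) has_derivative (\<lambda>h. (0, h))) (at y)"
    by (auto intro!: derivative_eq_intros)
  have "((\<lambda>s. f (x, s)) has_derivative (\<lambda>h. ?D (0, h))) (at y)"
    using has_derivative_compose[OF P Df] by simp
  moreover have "(\<lambda>h. ?D (0, h)) = (*) (dr f (x, y))"
    proof
    fix h show "?D (0, h) = dr f (x, y) * h"
      using linear_cmul[OF lin, of h "(0, 1)"] by (simp add: dr_def mult.commute)
  qed
  ultimately show ?thesis by (simp add: has_field_derivative_def)
qed

lemma tri: fixes a P Q :: real
  assumes "\<bar>a - P\<bar> < \<bar>P - Q\<bar> / 2" "\<bar>a - Q\<bar> < \<bar>P - Q\<bar> / 2" shows False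
proof -
  have "\<bar>P - Q\<bar> \<le> \<bar>P - a\<bar> + \<bar>a - Q\<bar>" using abs_triangle_ineq[of "P - a" "a - Q"] by simp
  then show False using assms by (simp add: abs_minus_commute)
qed

lemma schwarz:
  fixes f :: "real \<times> real \<Rightarrow> real"
  assumes U: "open U" and pU: "p \<in> U"
    and d0: "\<forall>q\<in>U. f differentiable (at q)"
    and dd: "\<forall>q\<in>U. dt f differentiable (at q) \<and> dr f differentiable (at q)"
    and c1: "continuous_on U (dr (dt f))" and c2: "continuous_on U (dt (dr f))"
  shows "dr (dt f) p = dt (dr f) p"
proof (rule ccontr)
  assume ne: "dr (dt f) p \<noteq> dt (dr f) p"
  define \<epsilon> where "\<epsilon> = \<bar>dr (dt f) p - dt (dr f) p\<bar> / 2"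
  have \<epsilon>: "\<epsilon> > 0" using ne by (simp add: \<epsilon>_def)
  obtain e where e: "e > 0" "ball p e \<subseteq> U" using U pU open_contains_ball by blast
  obtain d1 where d1: "d1 > 0" "\<forall>q\<in>U. dist q p < d1 \<longrightarrow> dist (dr (dt f) q) (dr (dt f) p) < \<epsilon>"
    using c1 pU \<epsilon> unfolding continuous_on_iff by blast
  obtain d2 where d2: "d2 > 0" "\<forall>q\<in>U. dist q p < d2 \<longrightarrow> dist (dt (dr f) q) (dt (dr f) p) < \<epsilon>"
    using c2 pU \<epsilon> unfolding continuous_on_iff by blast
  define h where "h = min e (min d1 d2) / 3"
  have h: "h > 0" using e d1 d2 by (simp add: h_def)
  obtain t r where p: "p = (t, r)" by (cases p)
  have inU: "(a, b) \<in> U \<and> dist (a, b) p < d1 \<and> dist (a, b) p < d2"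
    if "t \<le> a" "a \<le> t + h" "r \<le> b" "b \<le> r + h" for a b
  proof -
    have "dist (a, b) p \<le> dist a t + dist b r" using p sqrt_sum_squares_le_sum_abs[of "a - t" "b - r"] by (simp add: dist_Pair_Pair dist_real_def)
    also have "\<dots> \<le> 2 * h" using that by (simp add: dist_real_def)
    finally have "dist (a, b) p < min e (min d1 d2)" using h unfolding h_def by linarith
    then show ?thesis using e(2) by (auto simp: dist_commute)
  qed
  define \<Delta> where "\<Delta> = f (t + h, r + h) - f (t + h, r) - f (t, r + h) + f (t, r)"
  obtain \<xi> where \<xi>: "t < \<xi>" "\<xi> < t + h"
    "(\<lambda>x. f (x, r + h) - f (x, r)) (t + h) - (\<lambda>x. f (x, r + h) - f (x, r)) t
      = (t + h - t) * (dt f (\<xi>, r + h) - dt f (\<xi>, r))"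
  proof -
    have D: "((\<lambda>x. f (x, r + h) - f (x, r)) has_real_derivative (dt f (x, r + h) - dt f (x, r))) (at x)"
      if "t \<le> x" "x \<le> t + h" for x
    proof -
      have "(x, r + h) \<in> U" "(x, r) \<in> U" using inU[OF that] h by auto
      then show ?thesis using d0 by (intro DERIV_diff partial_t) auto
    qed
    have "t < t + h" using h by simp
    from MVT2[OF this D] show ?thesis by (auto intro: that)
  qed
  obtain \<eta> where \<eta>: "r < \<eta>" "\<eta> < r + h"
    "dt f (\<xi>, r + h) - dt f (\<xi>, r) = (r + h - r) * dr (dt f) (\<xi>, \<eta>)"
  proof -
    have D: "((\<lambda>y. dt f (\<xi>, y)) has_real_derivative dr (dt f) (\<xi>, y)) (at y)"
      if "r \<le> y" "y \<le> r + h" for y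
    proof -
      have "(\<xi>, y) \<in> U" using inU[of \<xi> y] \<xi>(1,2) that by auto
      then show ?thesis using dd by (intro partial_r) auto
    qed
    have "r < r + h" using h by simp
    from MVT2[OF this D] show ?thesis by (auto intro: that)
  qed
  have A1: "\<Delta> = (t + h - t) * (dt f (\<xi>, r + h) - dt f (\<xi>, r))"
    using \<xi>(3) unfolding \<Delta>_def by linarith
  have A: "\<Delta> = h * h * dr (dt f) (\<xi>, \<eta>)"
    using A1 \<eta>(3) by (simp add: mult.assoc)
  obtain \<eta>' where \<eta>': "r < \<eta>'" "\<eta>' < r + h"
    "(\<lambda>y. f (t + h, y) - f (t, y)) (r + h) - (\<lambda>y. f (t + h, y) - f (t, y)) r
      = (r + h - r) * (dr f (t + h, \<eta>') - dr f (t, \<eta>'))"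
  proof -
    have D: "((\<lambda>y. f (t + h, y) - f (t, y)) has_real_derivative (dr f (t + h, y) - dr f (t, y))) (at y)"
      if "r \<le> y" "y \<le> r + h" for y
    proof -
      have "(t + h, y) \<in> U" "(t, y) \<in> U" using inU[of "t + h" y] inU[of t y] h that by auto
      then show ?thesis using d0 by (intro DERIV_diff partial_r) auto
    qed
    have "r < r + h" using h by simp
    from MVT2[OF this D] show ?thesis by (auto intro: that)
  qed
  obtain \<xi>' where \<xi>': "t < \<xi>'" "\<xi>' < t + h"
    "dr f (t + h, \<eta>') - dr f (t, \<eta>') = (t + h - t) * dt (dr f) (\<xi>', \<eta>')"
  proof -
    have D: "((\<lambda>x. dr f (x, \<eta>')) has_real_derivative dt (dr f) (x, \<eta>')) (at x)"
      if "t \<le> x" "x \<le> t + h" for x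
    proof -
      have "(x, \<eta>') \<in> U" using inU[of x \<eta>'] \<eta>'(1,2) that by auto
      then show ?thesis using dd by (intro partial_t) auto
    qed
    have "t < t + h" using h by simp
    from MVT2[OF this D] show ?thesis by (auto intro: that)
  qed
  have B1: "\<Delta> = (r + h - r) * (dr f (t + h, \<eta>') - dr f (t, \<eta>'))"
    using \<eta>'(3) unfolding \<Delta>_def by linarith
  have B: "\<Delta> = h * h * dt (dr f) (\<xi>', \<eta>')"
    using B1 \<xi>'(3) by (simp add: mult.assoc)
  have eq: "dr (dt f) (\<xi>, \<eta>) = dt (dr f) (\<xi>', \<eta>')" using A B h by simp
  have "dist (dr (dt f) (\<xi>, \<eta>)) (dr (dt f) p) < \<epsilon>"
  proof -
    have "(\<xi>, \<eta>) \<in> U \<and> dist (\<xi>, \<eta>) p < d1"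
      using inU[of \<xi> \<eta>] \<xi>(1,2) \<eta>(1,2) by linarith
    then show ?thesis using d1(2) by blast
  qed
  moreover have "dist (dt (dr f) (\<xi>', \<eta>')) (dt (dr f) p) < \<epsilon>"
  proof -
    have "(\<xi>', \<eta>') \<in> U \<and> dist (\<xi>', \<eta>') p < d2"
      using inU[of \<xi>' \<eta>'] \<xi>'(1,2) \<eta>'(1,2) by linarith
    then show ?thesis using d2(2) by blast
  qed
  ultimately have "\<bar>dt (dr f) (\<xi>', \<eta>') - dr (dt f) p\<bar> < \<bar>dr (dt f) p - dt (dr f) p\<bar> / 2"
      "\<bar>dt (dr f) (\<xi>', \<eta>') - dt (dr f) p\<bar> < \<bar>dr (dt f) p - dt (dr f) p\<bar> / 2"
    using eq unfolding \<epsilon>_def dist_real_def by simp_all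
  then show False by (rule tri)
qed



lemma alg_plus:
  fixes a r s c T R Ttt M Rrr :: real
  assumes r: "r > 0"
    and eq: "(1 + a\<^sup>2 * s\<^sup>2 / r\<^sup>2) * (Ttt - Rrr) - (1 - a\<^sup>2 * s\<^sup>2 / r\<^sup>2) * R / r
      + 2 * s * c / (2 * r\<^sup>2) * (a\<^sup>2 * (T\<^sup>2 - R\<^sup>2) + 1) = 0"
  shows "(- 1 / 2) * ((1 + a\<^sup>2 * s\<^sup>2 / r\<^sup>2) * (T + R)\<^sup>2 / 2 + s\<^sup>2 / (2 * r\<^sup>2))
      + r * ((a\<^sup>2 * (2 * s * c * (1/2 * T - 1/2 * R) / r\<^sup>2 - 2 * s\<^sup>2 * (- 1 / 2) / r^3)) * (T + R)\<^sup>2 / 2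
        + (1 + a\<^sup>2 * s\<^sup>2 / r\<^sup>2) * (T + R) * ((1/2 * Ttt - 1/2 * M) + (1/2 * M - 1/2 * Rrr))
        + s * c * (1/2 * T - 1/2 * R) / r\<^sup>2 - s\<^sup>2 * (- 1 / 2) / r^3)
    = - ((T + R) * (T - R) / 4) + (a * s / r)\<^sup>2 * ((T + R) * (T - R)) / 4
      - c * (s / r) * ((T + R) - (T - R)) / 2 + (s / r)\<^sup>2 / 4"
proof -
  let ?W = "1 + a\<^sup>2 * s\<^sup>2 / r\<^sup>2"
  have eq': "?W * (Ttt - Rrr) = (1 - a\<^sup>2 * s\<^sup>2 / r\<^sup>2) * R / r
      - 2 * s * c / (2 * r\<^sup>2) * (a\<^sup>2 * (T\<^sup>2 - R\<^sup>2) + 1)" using eq by linarith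
  have "?W * (T + R) * ((1/2 * Ttt - 1/2 * M) + (1/2 * M - 1/2 * Rrr)) = (T + R) / 2 * (?W * (Ttt - Rrr))"
    using r by (simp add: field_simps)
  also have "\<dots> = (T + R) / 2 * ((1 - a\<^sup>2 * s\<^sup>2 / r\<^sup>2) * R / r
      - 2 * s * c / (2 * r\<^sup>2) * (a\<^sup>2 * (T\<^sup>2 - R\<^sup>2) + 1))" by (simp only: eq')
  finally have k: "?W * (T + R) * ((1/2 * Ttt - 1/2 * M) + (1/2 * M - 1/2 * Rrr)) = (T + R) / 2 * ((1 - a\<^sup>2 * s\<^sup>2 / r\<^sup>2) * R / r
      - 2 * s * c / (2 * r\<^sup>2) * (a\<^sup>2 * (T\<^sup>2 - R\<^sup>2) + 1))" .
  show ?thesis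
    unfolding k using r
    by (simp add: field_simps power2_eq_square power3_eq_cube)
qed

lemma alg_minus:
  fixes a r s c T R Ttt M Rrr :: real
  assumes r: "r > 0"
    and eq: "(1 + a\<^sup>2 * s\<^sup>2 / r\<^sup>2) * (Ttt - Rrr) - (1 - a\<^sup>2 * s\<^sup>2 / r\<^sup>2) * R / r
      + 2 * s * c / (2 * r\<^sup>2) * (a\<^sup>2 * (T\<^sup>2 - R\<^sup>2) + 1) = 0"
  shows "(1 / 2) * ((1 + a\<^sup>2 * s\<^sup>2 / r\<^sup>2) * (T - R)\<^sup>2 / 2 + s\<^sup>2 / (2 * r\<^sup>2))
      + r * ((a\<^sup>2 * (2 * s * c * (1/2 * T + 1/2 * R) / r\<^sup>2 - 2 * s\<^sup>2 * (1 / 2) / r^3)) * (T - R)\<^sup>2 / 2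
        + (1 + a\<^sup>2 * s\<^sup>2 / r\<^sup>2) * (T - R) * ((1/2 * Ttt + 1/2 * M) - (1/2 * M + 1/2 * Rrr))
        + s * c * (1/2 * T + 1/2 * R) / r\<^sup>2 - s\<^sup>2 * (1 / 2) / r^3)
    = - (- ((T + R) * (T - R) / 4) + (a * s / r)\<^sup>2 * ((T + R) * (T - R)) / 4
      - c * (s / r) * ((T + R) - (T - R)) / 2 + (s / r)\<^sup>2 / 4)"
proof -
  let ?W = "1 + a\<^sup>2 * s\<^sup>2 / r\<^sup>2"
  have eq': "?W * (Ttt - Rrr) = (1 - a\<^sup>2 * s\<^sup>2 / r\<^sup>2) * R / r
      - 2 * s * c / (2 * r\<^sup>2) * (a\<^sup>2 * (T\<^sup>2 - R\<^sup>2) + 1)" using eq by linarith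
  have "?W * (T - R) * ((1/2 * Ttt + 1/2 * M) - (1/2 * M + 1/2 * Rrr)) = (T - R) / 2 * (?W * (Ttt - Rrr))"
    using r by (simp add: field_simps)
  also have "\<dots> = (T - R) / 2 * ((1 - a\<^sup>2 * s\<^sup>2 / r\<^sup>2) * R / r
      - 2 * s * c / (2 * r\<^sup>2) * (a\<^sup>2 * (T\<^sup>2 - R\<^sup>2) + 1))" by (simp only: eq')
  finally have k: "?W * (T - R) * ((1/2 * Ttt + 1/2 * M) - (1/2 * M + 1/2 * Rrr)) = (T - R) / 2 * ((1 - a\<^sup>2 * s\<^sup>2 / r\<^sup>2) * R / r
      - 2 * s * c / (2 * r\<^sup>2) * (a\<^sup>2 * (T\<^sup>2 - R\<^sup>2) + 1))" .
  show ?thesis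
    unfolding k using r
    by (simp add: field_simps power2_eq_square power3_eq_cube)
qed

lemma bound:
  fixes A B k z c P Q :: real
  assumes P: "P = (1 + k\<^sup>2) * A\<^sup>2 / 2 + z\<^sup>2 / 2" and Q: "Q = (1 + k\<^sup>2) * B\<^sup>2 / 2 + z\<^sup>2 / 2"
    and c: "\<bar>c\<bar> \<le> 1"
  shows "\<bar>- (A * B / 4) + k\<^sup>2 * (A * B) / 4 - c * z * (A - B) / 2 + z\<^sup>2 / 4\<bar> \<le> 4 * sqrt (P * Q)"
proof -
  have sq: "\<bar>x\<bar> \<le> sqrt (2 * X)" if "x\<^sup>2 \<le> 2 * X" for x X :: real
    using real_sqrt_le_mono[OF that] by simp
  have eP: "2 * P = A\<^sup>2 + k\<^sup>2 * A\<^sup>2 + z\<^sup>2" unfolding P by (simp add: algebra_simps)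
  have eQ: "2 * Q = B\<^sup>2 + k\<^sup>2 * B\<^sup>2 + z\<^sup>2" unfolding Q by (simp add: algebra_simps)
  have nn: "0 \<le> A\<^sup>2" "0 \<le> k\<^sup>2 * A\<^sup>2" "0 \<le> z\<^sup>2" "0 \<le> B\<^sup>2" "0 \<le> k\<^sup>2 * B\<^sup>2" by simp_all
  have kA: "(k * A)\<^sup>2 = k\<^sup>2 * A\<^sup>2" "(k * B)\<^sup>2 = k\<^sup>2 * B\<^sup>2" by (simp_all add: power_mult_distrib)
  have A1: "\<bar>A\<bar> \<le> sqrt (2 * P)" by (rule sq) (use eP nn in linarith)
  have A2: "\<bar>k * A\<bar> \<le> sqrt (2 * P)" by (rule sq) (use eP nn kA in linarith)
  have A3: "\<bar>z\<bar> \<le> sqrt (2 * P)" by (rule sq) (use eP nn in linarith)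
  have B1: "\<bar>B\<bar> \<le> sqrt (2 * Q)" by (rule sq) (use eQ nn in linarith)
  have B2: "\<bar>k * B\<bar> \<le> sqrt (2 * Q)" by (rule sq) (use eQ nn kA in linarith)
  have B3: "\<bar>z\<bar> \<le> sqrt (2 * Q)" by (rule sq) (use eQ nn in linarith)
  have P0: "P \<ge> 0" "Q \<ge> 0" using P Q by simp_all
  have S: "sqrt (2 * P) * sqrt (2 * Q) = 2 * sqrt (P * Q)"
  proof -
    have s4: "sqrt (4::real) = 2" using real_sqrt_abs[of 2] by simp
    have "sqrt (2 * P) * sqrt (2 * Q) = sqrt (4 * (P * Q))"
      by (simp add: real_sqrt_mult[symmetric] algebra_simps)
    also have "\<dots> = sqrt 4 * sqrt (P * Q)" by (rule real_sqrt_mult)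
    finally show ?thesis using s4 by simp
  qed
  have m: "\<bar>x\<bar> * \<bar>y\<bar> \<le> 2 * sqrt (P * Q)" if "\<bar>x\<bar> \<le> sqrt (2 * P)" "\<bar>y\<bar> \<le> sqrt (2 * Q)" for x y
    using mult_mono[OF that] S P0 by simp
  have t1: "\<bar>A * B\<bar> \<le> 2 * sqrt (P * Q)" using m[OF A1 B1] by (simp add: abs_mult)
  have t2: "\<bar>k\<^sup>2 * (A * B)\<bar> \<le> 2 * sqrt (P * Q)" using m[OF A2 B2]
    by (simp add: abs_mult power2_eq_square algebra_simps)
  have t3: "\<bar>z * A\<bar> \<le> 2 * sqrt (P * Q)" using m[OF A1 B3] by (simp add: abs_mult mult.commute)
  have t4: "\<bar>z * B\<bar> \<le> 2 * sqrt (P * Q)" using m[OF A3 B1] by (simp add: abs_mult)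
  have t5: "\<bar>z\<^sup>2\<bar> \<le> 2 * sqrt (P * Q)" using m[OF A3 B3] by (simp add: abs_mult power2_eq_square)
  have t34: "\<bar>c * z * (A - B)\<bar> \<le> 4 * sqrt (P * Q)"
  proof -
    have "\<bar>c * z * (A - B)\<bar> = \<bar>c\<bar> * \<bar>z * A - z * B\<bar>" proof -
      have "c * z * (A - B) = c * (z * A - z * B)" by (simp add: algebra_simps)
      then show ?thesis by (simp only: abs_mult)
    qed
    also have "\<dots> \<le> 1 * \<bar>z * A - z * B\<bar>" by (rule mult_right_mono[OF c]) simp
    also have "\<dots> \<le> \<bar>z * A\<bar> + \<bar>z * B\<bar>" by (simp add: abs_triangle_ineq4)
    finally show ?thesis using t3 t4 by linarith
  qed
  have "\<bar>- (A * B / 4) + k\<^sup>2 * (A * B) / 4 - c * z * (A - B) / 2 + z\<^sup>2 / 4\<bar>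
      \<le> \<bar>A * B\<bar> / 4 + \<bar>k\<^sup>2 * (A * B)\<bar> / 4 + \<bar>c * z * (A - B)\<bar> / 2 + \<bar>z\<^sup>2\<bar> / 4"
    using abs_ge_self[of "A * B"] abs_ge_minus_self[of "A * B"]
      abs_ge_self[of "k\<^sup>2 * (A * B)"] abs_ge_minus_self[of "k\<^sup>2 * (A * B)"]
      abs_ge_self[of "c * z * (A - B)"] abs_ge_minus_self[of "c * z * (A - B)"]
      abs_ge_self[of "z\<^sup>2"] abs_ge_minus_self[of "z\<^sup>2"]
    unfolding abs_le_iff by linarith
  then show ?thesis using t1 t2 t34 t5 by linarith
qed


lemma derivF_plus:
  fixes u :: "real \<times> real \<Rightarrow> real"
  assumes Du: "(u has_derivative Du) (at p)"
    and DT: "(dt u has_derivative DT) (at p)"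
    and DR: "(dr u has_derivative DR) (at p)"
    and r: "snd p \<noteq> 0"
  shows "((\<lambda>q. snd q * (energy \<alpha> u q + momentum \<alpha> u q)) has_derivative
    (\<lambda>h. snd h * ((1 + \<alpha>\<^sup>2 * (sin (u p))\<^sup>2 / (snd p)\<^sup>2) * (dt u p + dr u p)\<^sup>2 / 2 + (sin (u p))\<^sup>2 / (2 * (snd p)\<^sup>2))
      + snd p * ((\<alpha>\<^sup>2 * (2 * sin (u p) * cos (u p) * Du h / (snd p)\<^sup>2 - 2 * (sin (u p))\<^sup>2 * snd h / (snd p)^3)) * (dt u p + dr u p)\<^sup>2 / 2
        + (1 + \<alpha>\<^sup>2 * (sin (u p))\<^sup>2 / (snd p)\<^sup>2) * (dt u p + dr u p) * (DT h + DR h)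
        + sin (u p) * cos (u p) * Du h / (snd p)\<^sup>2 - (sin (u p))\<^sup>2 * snd h / (snd p)^3))) (at p)"
  unfolding energy_def momentum_def skyrme_w_def
  apply (rule derivative_eq_intros Du DT DR refl | simp add: r)+
  apply (rule ext)
  apply (simp add: field_simps power2_eq_square power3_eq_cube r)
  done

lemma derivF_minus:
  fixes u :: "real \<times> real \<Rightarrow> real"
  assumes Du: "(u has_derivative Du) (at p)"
    and DT: "(dt u has_derivative DT) (at p)"
    and DR: "(dr u has_derivative DR) (at p)"
    and r: "snd p \<noteq> 0"
  shows "((\<lambda>q. snd q * (energy \<alpha> u q - momentum \<alpha> u q)) has_derivative
    (\<lambda>h. snd h * ((1 + \<alpha>\<^sup>2 * (sin (u p))\<^sup>2 / (snd p)\<^sup>2) * (dt u p - dr u p)\<^sup>2 / 2 + (sin (u p))\<^sup>2 / (2 * (snd p)\<^sup>2))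
      + snd p * ((\<alpha>\<^sup>2 * (2 * sin (u p) * cos (u p) * Du h / (snd p)\<^sup>2 - 2 * (sin (u p))\<^sup>2 * snd h / (snd p)^3)) * (dt u p - dr u p)\<^sup>2 / 2
        + (1 + \<alpha>\<^sup>2 * (sin (u p))\<^sup>2 / (snd p)\<^sup>2) * (dt u p - dr u p) * (DT h - DR h)
        + sin (u p) * cos (u p) * Du h / (snd p)\<^sup>2 - (sin (u p))\<^sup>2 * snd h / (snd p)^3))) (at p)"
  unfolding energy_def momentum_def skyrme_w_def
  apply (rule derivative_eq_intros Du DT DR refl | simp add: r)+
  apply (rule ext)
  apply (simp add: field_simps power2_eq_square power3_eq_cube r)
  done

lemma main_at:
  fixes u :: "real \<times> real \<Rightarrow> real"
  assumes U: "open U" and Upos: "U \<subseteq> {p. snd p > 0}" and C2: "C2_on U u"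
    and eqn: "skyrme_eq_on \<alpha> U u" and pU: "p \<in> U"
  shows "\<bar>dxi (\<lambda>q. snd q * (energy \<alpha> u q + momentum \<alpha> u q)) p\<bar>
          \<le> 4 * sqrt ((energy \<alpha> u p + momentum \<alpha> u p) * (energy \<alpha> u p - momentum \<alpha> u p))
      \<and> \<bar>deta (\<lambda>q. snd q * (energy \<alpha> u q - momentum \<alpha> u q)) p\<bar>
          \<le> 4 * sqrt ((energy \<alpha> u p + momentum \<alpha> u p) * (energy \<alpha> u p - momentum \<alpha> u p))"
proof -
  have r: "snd p > 0" using Upos pU by auto
  have d0: "\<forall>q\<in>U. u differentiable (at q)"
    and d1: "\<forall>q\<in>U. dt u differentiable (at q) \<and> dr u differentiable (at q)"
    and c1: "continuous_on U (dr (dt u))" and c2: "continuous_on U (dt (dr u))"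
    using C2 unfolding C2_on_def by auto
  have sym: "dr (dt u) p = dt (dr u) p" by (rule schwarz[OF U pU d0 d1 c1 c2])
  define Du where "Du = frechet_derivative u (at p)"
  define DT where "DT = frechet_derivative (dt u) (at p)"
  define DR where "DR = frechet_derivative (dr u) (at p)"
  have hDu: "(u has_derivative Du) (at p)" unfolding Du_def using d0 pU frechet_derivative_works by blast
  have hDT: "(dt u has_derivative DT) (at p)" unfolding DT_def using d1 pU frechet_derivative_works by blast
  have hDR: "(dr u has_derivative DR) (at p)" unfolding DR_def using d1 pU frechet_derivative_works by blast
  have lDu: "linear Du" using hDu has_derivative_linear by blast
  have lDT: "linear DT" using hDT has_derivative_linear by blast
  have lDR: "linear DR" using hDR has_derivative_linear by blast
  have Du1: "Du (1/2, -1/2) = 1/2 * dt u p - 1/2 * dr u p"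
    using lin2[OF lDu, of "1/2" "-1/2"] by (simp add: dt_def dr_def Du_def)
  have Du2: "Du (1/2, 1/2) = 1/2 * dt u p + 1/2 * dr u p"
    using lin2[OF lDu, of "1/2" "1/2"] by (simp add: dt_def dr_def Du_def)
  have DT1: "DT (1/2, -1/2) = 1/2 * dt (dt u) p - 1/2 * dr (dt u) p"
    using lin2[OF lDT, of "1/2" "-1/2"] by (simp add: dt_def[of "dt u"] dr_def[of "dt u"] DT_def)
  have DT2: "DT (1/2, 1/2) = 1/2 * dt (dt u) p + 1/2 * dr (dt u) p"
    using lin2[OF lDT, of "1/2" "1/2"] by (simp add: dt_def[of "dt u"] dr_def[of "dt u"] DT_def)
  have DR1: "DR (1/2, -1/2) = 1/2 * dr (dt u) p - 1/2 * dr (dr u) p"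
    using lin2[OF lDR, of "1/2" "-1/2"] sym by (simp add: dt_def[of "dr u"] dr_def[of "dr u"] DR_def)
  have DR2: "DR (1/2, 1/2) = 1/2 * dr (dt u) p + 1/2 * dr (dr u) p"
    using lin2[OF lDR, of "1/2" "1/2"] sym by (simp add: dt_def[of "dr u"] dr_def[of "dr u"] DR_def)
  have weq: "(1 + \<alpha>\<^sup>2 * (sin (u p))\<^sup>2 / (snd p)\<^sup>2) * (dt (dt u) p - dr (dr u) p)
      - (1 - \<alpha>\<^sup>2 * (sin (u p))\<^sup>2 / (snd p)\<^sup>2) * dr u p / snd p
      + 2 * sin (u p) * cos (u p) / (2 * (snd p)\<^sup>2) * (\<alpha>\<^sup>2 * ((dt u p)\<^sup>2 - (dr u p)\<^sup>2) + 1) = 0"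
    using eqn pU unfolding skyrme_eq_on_def skyrme_w_def by (simp add: sin_double)
  let ?T = "dt u p" and ?R = "dr u p" and ?s = "sin (u p)" and ?c = "cos (u p)" and ?r = "snd p"
  let ?X = "- ((?T + ?R) * (?T - ?R) / 4) + (\<alpha> * ?s / ?r)\<^sup>2 * ((?T + ?R) * (?T - ?R)) / 4
      - ?c * (?s / ?r) * ((?T + ?R) - (?T - ?R)) / 2 + (?s / ?r)\<^sup>2 / 4"
  have r0: "snd p \<noteq> 0" using r by simp
  note fp = frechet_derivative_at[OF derivF_plus[OF hDu hDT hDR r0, of \<alpha>], symmetric]
  note fm = frechet_derivative_at[OF derivF_minus[OF hDu hDT hDR r0, of \<alpha>], symmetric]
  have X1: "dxi (\<lambda>q. snd q * (energy \<alpha> u q + momentum \<alpha> u q)) p = ?X"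
    unfolding dxi_def fp
    using alg_plus[OF r weq, of "dr (dt u) p"]
    by (simp only: Du1 DT1 DR1 snd_conv)
  have X2: "deta (\<lambda>q. snd q * (energy \<alpha> u q - momentum \<alpha> u q)) p = - ?X"
    unfolding deta_def fm
    using alg_minus[OF r weq, of "dr (dt u) p"]
    by (simp only: Du2 DT2 DR2 snd_conv)
  have P: "energy \<alpha> u p + momentum \<alpha> u p = (1 + (\<alpha> * ?s / ?r)\<^sup>2) * (?T + ?R)\<^sup>2 / 2 + (?s / ?r)\<^sup>2 / 2"
    using r unfolding energy_def momentum_def skyrme_w_def by (simp add: field_simps power2_eq_square)
  have Q: "energy \<alpha> u p - momentum \<alpha> u p = (1 + (\<alpha> * ?s / ?r)\<^sup>2) * (?T - ?R)\<^sup>2 / 2 + (?s / ?r)\<^sup>2 / 2"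
    using r unfolding energy_def momentum_def skyrme_w_def by (simp add: field_simps power2_eq_square)
  have B: "\<bar>?X\<bar> \<le> 4 * sqrt ((energy \<alpha> u p + momentum \<alpha> u p) * (energy \<alpha> u p - momentum \<alpha> u p))"
    by (rule bound[OF P Q]) simp
  show ?thesis using B X1 X2 by simp
qed

theorem mainTheorem9:
  shows "\<exists>C::real. \<forall>\<alpha>::real. \<forall>U u. \<alpha> > 0 \<and> open U \<and> U \<subseteq> {p. snd p > 0}
     \<and> C2_on U u \<and> skyrme_eq_on \<alpha> U u \<longrightarrow>
     (\<forall>p\<in>U.
        \<bar>dxi (\<lambda>q. snd q * (energy \<alpha> u q + momentum \<alpha> u q)) p\<bar>
          \<le> C * sqrt ((energy \<alpha> u p + momentum \<alpha> u p) * (energy \<alpha> u p - momentum \<alpha> u p))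
      \<and> \<bar>deta (\<lambda>q. snd q * (energy \<alpha> u q - momentum \<alpha> u q)) p\<bar>
          \<le> C * sqrt ((energy \<alpha> u p + momentum \<alpha> u p) * (energy \<alpha> u p - momentum \<alpha> u p)))"
  by (intro exI[of _ 4] allI impI ballI) (rule main_at; auto)

end
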